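(* Let $\theta>0$, $\lambda>0$, $\mu>0$, $e\ge 0$. For $\alpha\ge0$, $d\ge0$ let $$\pi(\alpha,d)=(\theta+\mu)\alpha-\frac{\alpha^2}{2}-\frac{\alpha}{\alpha+d}\lambda\alpha\theta-d,\qquad W(\alpha,d)=\pi(\alpha,d)-e\,\frac{\alpha}{\alpha+d}\,\lambda\alpha\theta .$$ Then the deployment component of the joint maximizer of $W$ over $(\alpha,d)$ (first-best deployment) is $$\alpha^{**}_{FB}(\theta)=\max\!\left\{0,\;\begin{cases}\mu+\theta\big(1-(1+e)\lambda\big), & (1+e)\lambda\theta\le 1,\\ \theta+\mu+1-2\sqrt{(1+e)\lambda\theta}, & (1+e)\lambda\theta>1.\end{cases}\right\}$$
   Context: $\alpha$ is AI deployment, $d$ security investment, $\theta$ capability, $\lambda$ breach-loss magnitude, $\mu$ organizational readiness, $e$ the breach externality parameter (total social breach damage is $(1+e)p\cdot L$ with $p=\alpha/(\alpha+d)$ and $L=\lambda\alpha\theta$). Convention $p(0,d)=0$. *)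

theory Defs
  imports Complex_Main
begin

definition breach_prob :: "real \<Rightarrow> real \<Rightarrow> real" where
  "breach_prob \<alpha> d = (if \<alpha> = 0 then 0 else \<alpha> / (\<alpha> + d))"

definition profit :: "real \<Rightarrow> real \<Rightarrow> real \<Rightarrow> real \<Rightarrow> real \<Rightarrow> real" where
  "profit \<theta> lam \<mu> \<alpha> d =
     (\<theta> + \<mu>) * \<alpha> - \<alpha>^2 / 2 - breach_prob \<alpha> d * (lam * \<alpha> * \<theta>) - d"

definition welfare :: "real \<Rightarrow> real \<Rightarrow> real \<Rightarrow> real \<Rightarrow> real \<Rightarrow> real \<Rightarrow> real" where
  "welfare \<theta> lam \<mu> e \<alpha> d =
     profit \<theta> lam \<mu> \<alpha> d - e * breach_prob \<alpha> d * (lam * \<alpha> * \<theta>)"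

definition alpha_FB :: "real \<Rightarrow> real \<Rightarrow> real \<Rightarrow> real \<Rightarrow> real" where
  "alpha_FB \<theta> lam \<mu> e = max 0
     (if (1 + e) * lam * \<theta> \<le> 1 then \<mu> + \<theta> * (1 - (1 + e) * lam)
      else \<theta> + \<mu> + 1 - 2 * sqrt ((1 + e) * lam * \<theta>))"

end

theory Submission
  imports Defs
begin

lemma welfare_pos:
  assumes "a > 0" "d \<ge> 0"
  shows "welfare \<theta> lam \<mu> e a d = (\<theta>+\<mu>)*a - a^2/2 - ((1+e)*lam*\<theta>) * (a^2/(a+d)) - d"
proof -
  have "breach_prob a d * (lam * a * \<theta>) = lam*\<theta>*(a^2/(a+d))"
    using assms unfolding breach_prob_def by (simp add: power2_eq_square)
  moreover have "((1+e)*lam*\<theta>) * (a^2/(a+d)) = lam*\<theta>*(a^2/(a+d)) + e*(lam*\<theta>*(a^2/(a+d)))"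
    by (simp add: algebra_simps add_divide_distrib)
  ultimately show ?thesis unfolding welfare_def profit_def by (simp add: mult.assoc)
qed

lemma welfare_zero: "welfare \<theta> lam \<mu> e 0 d = - d"
  unfolding welfare_def profit_def breach_prob_def by simp

lemma key_bound:
  fixes k a d :: real
  assumes "k > 0" "a \<ge> 0" "d \<ge> 0"
  shows "k * (a^2/(a+d)) + d \<ge> (if k \<le> 1 then k else 2*sqrt k - 1) * a"
proof (cases "a = 0")
  case True then show ?thesis using assms by simp
next
  case False
  hence ap: "a > 0" using assms by simp
  hence apd: "a + d > 0" using assms by simp
  show ?thesis
  proof (cases "k \<le> 1")
    case True
    have "d * (a + d - k*a) \<ge> 0" using True assms ap
      by (intro mult_nonneg_nonneg) (auto simp: algebra_simps intro: order_trans[of _ "a"] mult_left_le_one_le)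
    hence "k*a^2 + d*(a+d) \<ge> k*a*(a+d)" by (simp add: algebra_simps power2_eq_square)
    hence "(k*a^2 + d*(a+d))/(a+d) \<ge> k*a" using apd by (simp add: field_simps)
    moreover have "(k*a^2 + d*(a+d))/(a+d) = k * (a^2/(a+d)) + d" using apd by (simp add: field_simps)
    ultimately show ?thesis using True by simp
  next
    case False
    define s where "s = sqrt k"
    have ks: "k = s^2" using assms s_def by simp
    have "(s*a - (a+d))^2 \<ge> 0" by simp
    hence "s^2*a^2 + (a+d)^2 \<ge> 2*s*a*(a+d)" by (simp add: power2_eq_square algebra_simps)
    hence "(s^2*a^2 + (a+d)^2)/(a+d) \<ge> 2*s*a" using apd by (simp add: field_simps)
    moreover have "(s^2*a^2 + (a+d)^2)/(a+d) = k * (a^2/(a+d)) + d + a"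
      using apd ks by (simp add: field_simps power2_eq_square)
    ultimately show ?thesis using False s_def by (simp add: algebra_simps)
  qed
qed

lemma key_attain:
  fixes k a :: real
  assumes "k > 0" "a > 0"
  shows "k * (a^2/(a + (if k \<le> 1 then 0 else a*(sqrt k - 1)))) + (if k \<le> 1 then 0 else a*(sqrt k - 1))
         = (if k \<le> 1 then k else 2*sqrt k - 1) * a"
proof (cases "k \<le> 1")
  case True then show ?thesis using assms by (simp add: power2_eq_square)
next
  case False
  define s where "s = sqrt k"
  have ks: "k = s^2" using assms s_def by simp
  have sp: "s > 0" using assms s_def by simp
  have "a + a*(s-1) = a*s" by (simp add: algebra_simps)
  then show ?thesis using False assms sp ks s_def[symmetric]
    by (simp add: field_simps power2_eq_square)
qed

theorem proposition6:
  fixes \<theta> lam \<mu> e :: real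
  assumes "\<theta> > 0" and "lam > 0" and "\<mu> > 0" and "e \<ge> 0"
  shows "(\<exists>d\<ge>0. \<forall>a'\<ge>0. \<forall>d'\<ge>0.
            welfare \<theta> lam \<mu> e a' d' \<le> welfare \<theta> lam \<mu> e (alpha_FB \<theta> lam \<mu> e) d)
       \<and> (\<forall>a\<ge>0. \<forall>d\<ge>0.
            (\<forall>a'\<ge>0. \<forall>d'\<ge>0. welfare \<theta> lam \<mu> e a' d' \<le> welfare \<theta> lam \<mu> e a d)
            \<longrightarrow> a = alpha_FB \<theta> lam \<mu> e)"
proof -
  define k where "k = (1+e)*lam*\<theta>"
  have kp: "k > 0" using assms unfolding k_def by (simp add: mult_pos_pos add_pos_nonneg)
  define c where "c = (if k \<le> 1 then k else 2*sqrt k - 1)"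
  define m where "m = \<theta> + \<mu> - c"
  define V where "V = (\<lambda>a::real. m*a - a^2/2)"
  define ds where "ds = (\<lambda>a::real. if k \<le> 1 then 0 else a*(sqrt k - 1))"
  define A where "A = alpha_FB \<theta> lam \<mu> e"
  have A: "A = max 0 m"
    unfolding A_def alpha_FB_def m_def c_def k_def
    by (cases "(1 + e) * lam * \<theta> \<le> 1") (auto simp: algebra_simps)
  have bound: "welfare \<theta> lam \<mu> e a d \<le> V a" if "a \<ge> 0" "d \<ge> 0" for a d
  proof (cases "a = 0")
    case True then show ?thesis using that by (simp add: welfare_zero V_def)
  next
    case False
    hence "a > 0" using that by simp
    moreover have "k * (a^2/(a+d)) + d \<ge> c * a" using key_bound[OF kp that] c_def by simp
    moreover have "welfare \<theta> lam \<mu> e a d = (\<theta>+\<mu>)*a - a^2/2 - k * (a^2/(a+d)) - d"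
      using welfare_pos[of a d] that calculation unfolding k_def by simp
    ultimately show ?thesis unfolding V_def m_def by (simp add: algebra_simps)
  qed
  have dsnn: "ds a \<ge> 0" if "a \<ge> 0" for a
    using that kp unfolding ds_def by auto
  have attain: "welfare \<theta> lam \<mu> e a (ds a) = V a" if "a \<ge> 0" for a
  proof (cases "a = 0")
    case True then show ?thesis by (simp add: welfare_zero V_def ds_def)
  next
    case False
    hence ap: "a > 0" using that by simp
    have "k * (a^2/(a + ds a)) + ds a = c * a" using key_attain[OF kp ap] c_def ds_def by simp
    moreover have "welfare \<theta> lam \<mu> e a (ds a) = (\<theta>+\<mu>)*a - a^2/2 - k * (a^2/(a+ds a)) - ds a"
      using welfare_pos[OF ap dsnn[OF that]] unfolding k_def by simp
    ultimately show ?thesis unfolding V_def m_def by (simp add: algebra_simps)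
  qed
  have Vmax: "V a \<le> V A" if "a \<ge> 0" for a
  proof (cases "m \<ge> 0")
    case True
    have "(a - m)^2 \<ge> 0" by simp
    then show ?thesis using True A unfolding V_def by (simp add: power2_eq_square algebra_simps)
  next
    case False
    have "m*a \<le> 0" using False that by (simp add: mult_nonpos_nonneg)
    moreover have "a^2 \<ge> 0" by simp
    ultimately have "m*a - a^2/2 \<le> 0" by linarith
    moreover have "A = 0" using False A by simp
    ultimately show ?thesis unfolding V_def by simp
  qed
  have Vuniq: "a = A" if "a \<ge> 0" "V a \<ge> V A" for a
  proof (cases "m \<ge> 0")
    case True
    have "V A - V a = (a - m)^2/2" using True A unfolding V_def by (simp add: power2_eq_square algebra_simps)
    hence "(a - m)^2 \<le> 0" using that by linarith
    hence "a = m" by simp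
    then show ?thesis using True A by simp
  next
    case False
    have "m*a \<le> 0" using False that by (simp add: mult_nonpos_nonneg)
    moreover have "V A = 0" using False A unfolding V_def by simp
    ultimately have "a^2 \<le> 0" using that unfolding V_def by linarith
    hence "a = 0" by simp
    then show ?thesis using False A by simp
  qed
  have Anonneg: "A \<ge> 0" using A by simp
  show ?thesis
  proof (intro conjI allI impI)
    show "\<exists>d\<ge>0. \<forall>a'\<ge>0. \<forall>d'\<ge>0. welfare \<theta> lam \<mu> e a' d' \<le> welfare \<theta> lam \<mu> e (alpha_FB \<theta> lam \<mu> e) d"
    proof (intro exI[of _ "ds A"] conjI allI impI)
      show "ds A \<ge> 0" using dsnn[OF Anonneg] .
      fix a' d' :: real assume "a' \<ge> 0" "d' \<ge> 0"
      then show "welfare \<theta> lam \<mu> e a' d' \<le> welfare \<theta> lam \<mu> e (alpha_FB \<theta> lam \<mu> e) (ds A)"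
        using bound Vmax attain[OF Anonneg] A_def by (metis order_trans)
    qed
  next
    fix a d :: real
    assume a: "a \<ge> 0" and d: "d \<ge> 0"
      and opt: "\<forall>a'\<ge>0. \<forall>d'\<ge>0. welfare \<theta> lam \<mu> e a' d' \<le> welfare \<theta> lam \<mu> e a d"
    have "V A \<le> welfare \<theta> lam \<mu> e a d"
      using opt Anonneg dsnn[OF Anonneg] attain[OF Anonneg] by metis
    also have "\<dots> \<le> V a" using bound a d .
    finally show "a = alpha_FB \<theta> lam \<mu> e" using Vuniq a A_def by simp
  qed
qed

end
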